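(* Let $\mathsf{T}$ be an $R$-linear triangulated category, $X$ and $Y$ objects of $\mathsf{T}$, $d$ a positive even integer and $z\in R^d$. Assume $\lambda^n(X,Y)<\infty$ for all $n\in\mathbb{Z}$. If for all $n\gg0$ there are short exact sequences $$0\to\operatorname{Hom}_{\mathsf{T}}(X,\Sigma^nY)\to\operatorname{Hom}_{\mathsf{T}}(X,\Sigma^{n+d}Y)\to\operatorname{Hom}_{\mathsf{T}}(X,\Sigma^n(Y/\!\!/z))\to0$$ (of $R^0$-modules), then $h(X,Y/\!\!/z)(n)=h(X,Y)(n+d)-h(X,Y)(n)$ for all $n\gg0$, and for every $s\ge1$ one has $\Delta^{s-1}h(X,Y/\!\!/z)(n)=\Delta^sh(X,Y)(n)$ for all $n\gg0$.
   Context: $R=\bigoplus_{n\ge 0}R^n$ is a graded-commutative Noetherian ring. $\mathsf{T}$ is a triangulated category with suspension $\Sigma$ that is $R$-linear: a graded ring homomorphism $\phi$ from $R$ to the graded center of $\mathsf{T}$ (degree-$n$ elements are natural transformations $\eta:\mathrm{id}\to\Sigma^n$ with $\eta\Sigma=(-1)^n\Sigma\eta$), giving $\phi_Y:R\to\bigoplus_n\operatorname{Hom}_{\mathsf{T}}(Y,\Sigma^nY)$; each $\operatorname{Hom}_{\mathsf{T}}(X,\Sigma^nY)$ is an $R^0$-module. $\lambda^n(X,Y)=\ell_{R^0}\operatorname{Hom}_{\mathsf{T}}(X,\Sigma^nY)$. $Y/\!\!/z$ is defined by a distinguished triangle $Y\xrightarrow{\phi_Y(z)}\Sigma^dY\to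 Y/\!\!/z\to\Sigma Y$. The (index $d$) generalized Herbrand difference is $h(X,Y)(n)=\sum_{i=0}^{d-1}(-1)^{n+i}\lambda^{n+i}(X,Y)$. The difference operator of index $d$ is $\Delta^1f(n)=f(n+d)-f(n)$, $\Delta^0f=f$, $\Delta^sf=\Delta^1(\Delta^{s-1}f)$. *)

theory Defs
  imports "HOL-Algebra.Module" "HOL-Library.Extended_Nat"
begin

definition module_hom ::
  "('r, 'c) ring_scheme \<Rightarrow> ('r, 'a) module \<Rightarrow> ('r, 'b) module \<Rightarrow> ('a \<Rightarrow> 'b) \<Rightarrow> bool" where
  "module_hom R M N f \<longleftrightarrow>
     f \<in> carrier M \<rightarrow> carrier N \<and>
     (\<forall>x\<in>carrier M. \<forall>y\<in>carrier M. f (x \<oplus>\<^bsub>M\<^esub> y) = f x \<oplus>\<^bsub>N\<^esub> f y) \<and>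
     (\<forall>a\<in>carrier R. \<forall>x\<in>carrier M. f (a \<odot>\<^bsub>M\<^esub> x) = a \<odot>\<^bsub>N\<^esub> f x)"

definition short_exact ::
  "('r, 'c) ring_scheme \<Rightarrow> ('r, 'a) module \<Rightarrow> ('r, 'b) module \<Rightarrow> ('r, 'd) module
    \<Rightarrow> ('a \<Rightarrow> 'b) \<Rightarrow> ('b \<Rightarrow> 'd) \<Rightarrow> bool" where
  "short_exact R A B C f g \<longleftrightarrow>
     module_hom R A B f \<and> module_hom R B C g \<and>
     inj_on f (carrier A) \<and>
     g ` carrier B = carrier C \<and>
     f ` carrier A = {y \<in> carrier B. g y = \<zero>\<^bsub>C\<^esub>}"

definition module_length :: "('r, 'c) ring_scheme \<Rightarrow> ('r, 'a) module \<Rightarrow> enat" where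
  "module_length R M = Sup {enat n | n. \<exists>N :: nat \<Rightarrow> 'a set.
       (\<forall>i\<le>n. submodule (N i) R M) \<and> (\<forall>i<n. N i \<subset> N (Suc i))}"

text \<open>lambda^n as an integer (meaningful where the length is finite).\<close>
definition lam :: "('r, 'c) ring_scheme \<Rightarrow> (int \<Rightarrow> ('r, 'a) module) \<Rightarrow> int \<Rightarrow> int" where
  "lam R H n = int (the_enat (module_length R (H n)))"

text \<open>Generalized Herbrand difference of index d of the family H n = Hom(X, Sigma^n Y).\<close>
definition herbrand :: "('r, 'c) ring_scheme \<Rightarrow> nat \<Rightarrow> (int \<Rightarrow> ('r, 'a) module) \<Rightarrow> int \<Rightarrow> int" where
  "herbrand R d H n = (\<Sum>i<d. (if even (n + int i) then 1 else -1) * lam R H (n + int i))"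

definition diff_op :: "nat \<Rightarrow> (int \<Rightarrow> int) \<Rightarrow> int \<Rightarrow> int" where
  "diff_op d f n = f (n + int d) - f n"

definition Delta :: "nat \<Rightarrow> nat \<Rightarrow> (int \<Rightarrow> int) \<Rightarrow> int \<Rightarrow> int" where
  "Delta d s f = (diff_op d ^^ s) f"

end

theory Submission
  imports Defs
begin

lemma hom_zero:
  assumes "Module.module R M" "Module.module R N" "module_hom R M N f"
  shows "f \<zero>\<^bsub>M\<^esub> = \<zero>\<^bsub>N\<^esub>"
proof -
  interpret M: Module.module R M by fact
  interpret N: Module.module R N by fact
  have c: "f \<zero>\<^bsub>M\<^esub> \<in> carrier N" using assms(3) unfolding module_hom_def by auto
  have "f \<zero>\<^bsub>M\<^esub> = f \<zero>\<^bsub>M\<^esub> \<oplus>\<^bsub>N\<^esub> f \<zero>\<^bsub>M\<^esub>"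
    using assms(3) unfolding module_hom_def by (metis M.zero_closed M.l_zero)
  then show ?thesis using c using N.add.l_cancel_one' by blast
qed

lemma hom_minus:
  assumes "Module.module R M" "Module.module R N" "module_hom R M N f" "x \<in> carrier M" "y \<in> carrier M"
  shows "f (x \<ominus>\<^bsub>M\<^esub> y) = f x \<ominus>\<^bsub>N\<^esub> f y"
proof -
  interpret M: Module.module R M by fact
  interpret N: Module.module R N by fact
  have fc: "\<And>z. z \<in> carrier M \<Longrightarrow> f z \<in> carrier N" using assms(3) unfolding module_hom_def by auto
  have add: "\<And>a b. a \<in> carrier M \<Longrightarrow> b \<in> carrier M \<Longrightarrow> f (a \<oplus>\<^bsub>M\<^esub> b) = f a \<oplus>\<^bsub>N\<^esub> f b"
    using assms(3) unfolding module_hom_def by auto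
  have "f (x \<ominus>\<^bsub>M\<^esub> y) \<oplus>\<^bsub>N\<^esub> f y = f x"
    using add[of "x \<ominus>\<^bsub>M\<^esub> y" y] assms(4,5)
    by (metis M.minus_closed M.l_neg M.minus_eq M.a_assoc M.a_inv_closed M.r_zero)
  then show ?thesis using fc assms(4,5)
    by (metis M.minus_closed N.a_assoc N.r_neg N.r_zero N.minus_eq N.a_inv_closed)
qed

lemma hom_inv:
  assumes "Module.module R M" "Module.module R N" "module_hom R M N f" "x \<in> carrier M"
  shows "f (\<ominus>\<^bsub>M\<^esub> x) = \<ominus>\<^bsub>N\<^esub> f x"
proof -
  interpret M: Module.module R M by fact
  interpret N: Module.module R N by fact
  have "f (\<zero>\<^bsub>M\<^esub> \<ominus>\<^bsub>M\<^esub> x) = f \<zero>\<^bsub>M\<^esub> \<ominus>\<^bsub>N\<^esub> f x"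
    using hom_minus[OF assms(1-3)] assms(4) by simp
  moreover have "f x \<in> carrier N" using assms(3,4) unfolding module_hom_def by auto
  ultimately show ?thesis using hom_zero[OF assms(1-3)] assms(4)
    by (simp add: M.minus_eq N.minus_eq)
qed

lemma sub_image:
  assumes "Module.module R A" "Module.module R B" "module_hom R A B f" "submodule S R A"
  shows "submodule (f ` S) R B"
proof -
  interpret A: Module.module R A by fact
  interpret B: Module.module R B by fact
  have SA: "S \<subseteq> carrier A" using A.submoduleE(1)[OF assms(4)] .
  have h: "f \<in> carrier A \<rightarrow> carrier B"
     "\<And>x y. x\<in>carrier A \<Longrightarrow> y\<in>carrier A \<Longrightarrow> f (x \<oplus>\<^bsub>A\<^esub> y) = f x \<oplus>\<^bsub>B\<^esub> f y"
     "\<And>a x. a\<in>carrier R \<Longrightarrow> x\<in>carrier A \<Longrightarrow> f (a \<odot>\<^bsub>A\<^esub> x) = a \<odot>\<^bsub>B\<^esub> f x"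
    using assms(3) unfolding module_hom_def by auto
  have z: "\<zero>\<^bsub>A\<^esub> \<in> S" using subgroup.one_closed[OF submodule.axioms(1)[OF assms(4)]] by simp
  show ?thesis
  proof (rule B.submoduleI)
    show "f ` S \<subseteq> carrier B" using SA h(1) by auto
    show "\<zero>\<^bsub>B\<^esub> \<in> f ` S" using z hom_zero[OF assms(1-3)] by force
    show "\<ominus>\<^bsub>B\<^esub> a \<in> f ` S" if "a \<in> f ` S" for a
      using that hom_inv[OF assms(1-3)] SA A.submoduleE(3)[OF assms(4)] by force
    show "a \<oplus>\<^bsub>B\<^esub> b \<in> f ` S" if ha: "a \<in> f ` S" and hb: "b \<in> f ` S" for a b
    proof -
      obtain x where "x \<in> S" "a = f x" using ha by blast
      moreover obtain y where "y \<in> S" "b = f y" using hb by blast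
      ultimately show ?thesis using h(2)[of x y] SA A.submoduleE(5)[OF assms(4)]
        by (metis image_eqI subsetD)
    qed
    show "a \<odot>\<^bsub>B\<^esub> x \<in> f ` S" if ha: "a \<in> carrier R" and hx: "x \<in> f ` S" for a x
    proof -
      obtain y where "y \<in> S" "x = f y" using hx by blast
      then show ?thesis using h(3)[of a y] ha SA A.submoduleE(4)[OF assms(4)]
        by (metis image_eqI subsetD)
    qed
  qed
qed

lemma sub_preimage:
  assumes "Module.module R A" "Module.module R B" "module_hom R A B f" "submodule T R B"
  shows "submodule {x \<in> carrier A. f x \<in> T} R A"
proof -
  interpret A: Module.module R A by fact
  interpret B: Module.module R B by fact
  have h: "f \<in> carrier A \<rightarrow> carrier B"
     "\<And>x y. x\<in>carrier A \<Longrightarrow> y\<in>carrier A \<Longrightarrow> f (x \<oplus>\<^bsub>A\<^esub> y) = f x \<oplus>\<^bsub>B\<^esub> f y"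
     "\<And>a x. a\<in>carrier R \<Longrightarrow> x\<in>carrier A \<Longrightarrow> f (a \<odot>\<^bsub>A\<^esub> x) = a \<odot>\<^bsub>B\<^esub> f x"
    using assms(3) unfolding module_hom_def by auto
  have z: "\<zero>\<^bsub>B\<^esub> \<in> T" using subgroup.one_closed[OF submodule.axioms(1)[OF assms(4)]] by simp
  show ?thesis
  proof (rule A.submoduleI)
    show "{x \<in> carrier A. f x \<in> T} \<subseteq> carrier A" by auto
    show "\<zero>\<^bsub>A\<^esub> \<in> {x \<in> carrier A. f x \<in> T}" using z hom_zero[OF assms(1-3)] by force
    show "\<ominus>\<^bsub>A\<^esub> a \<in> {x \<in> carrier A. f x \<in> T}" if "a \<in> {x \<in> carrier A. f x \<in> T}" for a
      using that hom_inv[OF assms(1-3)] B.submoduleE(3)[OF assms(4)] by force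
    show "a \<oplus>\<^bsub>A\<^esub> b \<in> {x \<in> carrier A. f x \<in> T}" if "a \<in> {x \<in> carrier A. f x \<in> T}" "b \<in> {x \<in> carrier A. f x \<in> T}" for a b
      using that h(2)[of a b] B.submoduleE(5)[OF assms(4)] by auto
    show "a \<odot>\<^bsub>A\<^esub> x \<in> {x \<in> carrier A. f x \<in> T}" if "a \<in> carrier R" "x \<in> {x \<in> carrier A. f x \<in> T}" for a x
      using that h(3)[of a x] B.submoduleE(4)[OF assms(4)] by auto
  qed
qed

definition is_chain :: "('r, 'c) ring_scheme \<Rightarrow> ('r, 'a) module \<Rightarrow> nat \<Rightarrow> (nat \<Rightarrow> 'a set) \<Rightarrow> bool" where
  "is_chain R M n N \<longleftrightarrow> (\<forall>i\<le>n. submodule (N i) R M) \<and> (\<forall>i<n. N i \<subset> N (Suc i))"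

lemma length_ge: "is_chain R M n N \<Longrightarrow> enat n \<le> module_length R M"
  unfolding module_length_def is_chain_def by (rule Sup_upper) blast

lemma length_le: "(\<And>n N. is_chain R M n N \<Longrightarrow> n \<le> k) \<Longrightarrow> module_length R M \<le> enat k"
  unfolding module_length_def is_chain_def by (rule Sup_least) auto

lemma length_attained:
  assumes "Module.module R M" "module_length R M \<noteq> \<infinity>"
  shows "\<exists>N. is_chain R M (the_enat (module_length R M)) N"
proof -
  interpret M: Module.module R M by fact
  define S where "S = {enat n | n. \<exists>N.
       (\<forall>i\<le>n. submodule (N i) R M) \<and> (\<forall>i<n. N i \<subset> N (Suc i))}"
  have L: "module_length R M = Sup S" unfolding module_length_def S_def ..
  have "enat 0 \<in> S" unfolding S_def using M.carrier_is_submodule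
    by (intro CollectI exI[of _ 0] conjI exI[of _ "\<lambda>_. carrier M"]) auto
  hence ne: "S \<noteq> {}" by auto
  have fin: "finite S" using assms(2) ne unfolding L Sup_enat_def by (auto split: if_splits)
  have "Sup S = Max S" using ne fin unfolding Sup_enat_def by auto
  hence "Sup S \<in> S" using Max_in[OF fin ne] by simp
  then obtain n N where "Sup S = enat n" "(\<forall>i\<le>n. submodule (N i) R M) \<and> (\<forall>i<n. N i \<subset> N (Suc i))"
    unfolding S_def by blast
  then show ?thesis unfolding L is_chain_def by auto
qed

lemma weak_chain:
  assumes "\<forall>i\<le>n. submodule (N i) R M" "\<forall>i<n. N i \<subseteq> N (Suc i)"
  shows "\<exists>P. is_chain R M (card {i. i<n \<and> N i \<noteq> N (Suc i)}) P \<and> P 0 = N 0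
              \<and> P (card {i. i<n \<and> N i \<noteq> N (Suc i)}) = N n"
  using assms
proof (induction n)
  case 0
  then show ?case unfolding is_chain_def by (intro exI[of _ N]) auto
next
  case (Suc n)
  define k where "k = card {i. i<n \<and> N i \<noteq> N (Suc i)}"
  obtain P where P: "is_chain R M k P" "P 0 = N 0" "P k = N n"
    using Suc unfolding k_def by auto
  show ?case
  proof (cases "N n = N (Suc n)")
    case True
    have "{i. i<Suc n \<and> N i \<noteq> N (Suc i)} = {i. i<n \<and> N i \<noteq> N (Suc i)}"
      using True less_Suc_eq by auto
    then show ?thesis using P True unfolding k_def by auto
  next
    case False
    have e: "{i. i<Suc n \<and> N i \<noteq> N (Suc i)} = insert n {i. i<n \<and> N i \<noteq> N (Suc i)}"
      using False less_Suc_eq by auto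
    have c: "card {i. i<Suc n \<and> N i \<noteq> N (Suc i)} = Suc k"
      unfolding e k_def by simp
    define P' where "P' = P(Suc k := N (Suc n))"
    have "is_chain R M (Suc k) P'"
      unfolding is_chain_def
    proof (intro conjI allI impI)
      fix i assume "i \<le> Suc k"
      then show "submodule (P' i) R M"
        using P(1) Suc.prems(1) unfolding is_chain_def P'_def by (cases "i = Suc k") auto
    next
      fix i assume i: "i < Suc k"
      show "P' i \<subset> P' (Suc i)"
      proof (cases "i = k")
        case True
        then show ?thesis using P(3) False Suc.prems(2) unfolding P'_def by auto
      next
        case False
        then show ?thesis using i P(1) unfolding P'_def is_chain_def by auto
      qed
    qed
    moreover have "P' 0 = N 0" "P' (Suc k) = N (Suc n)" using P(2) unfolding P'_def by auto
    ultimately show ?thesis using c by metis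
  qed
qed

lemma weak_chain_card:
  assumes "\<forall>i\<le>n. submodule (N i) R M" "\<forall>i<n. N i \<subseteq> N (Suc i)"
    and "module_length R M = enat L"
  shows "card {i. i<n \<and> N i \<noteq> N (Suc i)} \<le> L"
  using weak_chain[OF assms(1,2)] length_ge assms(3) by fastforce

lemma inj_strict: "inj_on f X \<Longrightarrow> S \<subset> T \<Longrightarrow> T \<subseteq> X \<Longrightarrow> f ` S \<subset> f ` T"
proof -
  assume a: "inj_on f X" "S \<subset> T" "T \<subseteq> X"
  then obtain t where t: "t \<in> T" "t \<notin> S" by auto
  have "f t \<notin> f ` S" using inj_on_image_mem_iff[OF a(1), of t S] t a by auto
  then show ?thesis using a t by auto
qed

lemma sub_zero: "submodule S R M \<Longrightarrow> \<zero>\<^bsub>M\<^esub> \<in> S"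
  using subgroup.one_closed[OF submodule.axioms(1)] by fastforce

lemma ses_ge:
  assumes mA: "Module.module R A" and mB: "Module.module R B" and mC: "Module.module R C"
    and ses: "short_exact R A B C f g"
    and cA: "is_chain R A a NA" and cC: "is_chain R C c NC"
  shows "enat (a + c) \<le> module_length R B"
proof -
  interpret A: Module.module R A by fact
  interpret B: Module.module R B by fact
  interpret C: Module.module R C by fact
  have hf: "module_hom R A B f" and hg: "module_hom R B C g" and inj: "inj_on f (carrier A)"
    and surj: "g ` carrier B = carrier C" and ex: "f ` carrier A = {y \<in> carrier B. g y = \<zero>\<^bsub>C\<^esub>}"
    using ses unfolding short_exact_def by auto
  have gc: "\<And>y. y \<in> carrier B \<Longrightarrow> g y \<in> carrier C" using hg unfolding module_hom_def by auto
  have subA: "\<And>i. i \<le> a \<Longrightarrow> submodule (NA i) R A" and strA: "\<And>i. i < a \<Longrightarrow> NA i \<subset> NA (Suc i)"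
    using cA unfolding is_chain_def by auto
  have subC: "\<And>i. i \<le> c \<Longrightarrow> submodule (NC i) R C" and strC: "\<And>i. i < c \<Longrightarrow> NC i \<subset> NC (Suc i)"
    using cC unfolding is_chain_def by auto
  have NAc: "\<And>i. i \<le> a \<Longrightarrow> NA i \<subseteq> carrier A" using subA A.submoduleE(1) by blast
  have NCc: "\<And>i. i \<le> c \<Longrightarrow> NC i \<subseteq> carrier C" using subC C.submoduleE(1) by blast
  have pre_strict: "{y \<in> carrier B. g y \<in> S} \<subset> {y \<in> carrier B. g y \<in> T}"
    if st: "S \<subset> T" and tc: "T \<subseteq> carrier C" for S T
  proof -
    obtain z where z: "z \<in> T" "z \<notin> S" using st by auto
    moreover have "z \<in> g ` carrier B" using surj tc z(1) by auto
    from this obtain y where "y \<in> carrier B" "g y = z" by blast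
    then show ?thesis using z st by auto
  qed
  define N where "N i = (if i \<le> a then f ` NA i else {y \<in> carrier B. g y \<in> NC (i - a)})" for i
  have "is_chain R B (a + c) N"
    unfolding is_chain_def
  proof (intro conjI allI impI)
    fix i assume i: "i \<le> a + c"
    show "submodule (N i) R B"
    proof (cases "i \<le> a")
      case True
      then show ?thesis unfolding N_def using sub_image[OF mA mB hf subA[OF True]] by simp
    next
      case False
      then show ?thesis unfolding N_def using sub_preimage[OF mB mC hg subC[of "i - a"]] i by simp
    qed
  next
    fix i assume i: "i < a + c"
    show "N i \<subset> N (Suc i)"
    proof (cases "i < a")
      case True
      then show ?thesis unfolding N_def using inj_strict[OF inj strA[OF True] NAc[of "Suc i"]] by simp
    next
      case False
      show ?thesis
      proof (cases "i = a")
        case True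
        have c1: "1 \<le> c" using i True by simp
        have "N i \<subseteq> {y \<in> carrier B. g y = \<zero>\<^bsub>C\<^esub>}"
          unfolding N_def using True NAc[of a] ex by auto
        also have "\<dots> \<subseteq> {y \<in> carrier B. g y \<in> NC 0}" using sub_zero[OF subC[of 0]] by auto
        also have "\<dots> \<subset> {y \<in> carrier B. g y \<in> NC 1}"
        proof -
          have "NC 0 \<subset> NC 1" using strC[of 0] c1 by simp
          moreover have "NC 1 \<subseteq> carrier C" using NCc c1 by simp
          ultimately show ?thesis by (rule pre_strict)
        qed
        finally show ?thesis unfolding N_def using True by simp
      next
        case False
        hence ia: "a < i" using \<open>\<not> i < a\<close> by simp
        have "Suc i - a = Suc (i - a)" using ia by simp
        moreover have "NC (i - a) \<subset> NC (Suc (i - a))" using strC[of "i - a"] ia i by simp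
        moreover have "NC (Suc (i - a)) \<subseteq> carrier C" using NCc ia i by simp
        ultimately show ?thesis unfolding N_def using ia pre_strict by simp
      qed
    qed
  qed
  then show ?thesis by (rule length_ge)
qed

lemma modular:
  assumes mA: "Module.module R A" and mB: "Module.module R B" and mC: "Module.module R C"
    and ses: "short_exact R A B C f g"
    and s1: "submodule B1 R B" and s2: "submodule B2 R B" and sub: "B1 \<subseteq> B2"
    and eA: "{x \<in> carrier A. f x \<in> B1} = {x \<in> carrier A. f x \<in> B2}"
    and eC: "g ` B1 = g ` B2"
  shows "B1 = B2"
proof -
  interpret A: Module.module R A by fact
  interpret B: Module.module R B by fact
  interpret C: Module.module R C by fact
  have hf: "module_hom R A B f" and hg: "module_hom R B C g"
    and ex: "f ` carrier A = {y \<in> carrier B. g y = \<zero>\<^bsub>C\<^esub>}"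
    using ses unfolding short_exact_def by auto
  have gc: "\<And>y. y \<in> carrier B \<Longrightarrow> g y \<in> carrier C" using hg unfolding module_hom_def by auto
  have B1c: "B1 \<subseteq> carrier B" and B2c: "B2 \<subseteq> carrier B"
    using B.submoduleE(1) s1 s2 by auto
  have "B2 \<subseteq> B1"
  proof
    fix y assume y: "y \<in> B2"
    have "g y \<in> g ` B1" using eC y by auto
    then obtain y' where y': "y' \<in> B1" "g y = g y'" by (rule imageE) simp
    have yc: "y \<in> carrier B" "y' \<in> carrier B" using y y' B1c B2c by auto
    define w where "w = y \<ominus>\<^bsub>B\<^esub> y'"
    have w2: "w \<in> B2" unfolding w_def B.minus_eq
      using B.submoduleE(5)[OF s2] B.submoduleE(3)[OF s2] y y' sub by auto
    have "g w = g y \<ominus>\<^bsub>C\<^esub> g y'" unfolding w_def using hom_minus[OF mB mC hg yc] .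
    also have "\<dots> = \<zero>\<^bsub>C\<^esub>" using y' gc yc by (simp add: C.minus_eq C.r_neg)
    finally have "w \<in> f ` carrier A" using ex w2 B2c by auto
    then obtain x where x: "x \<in> carrier A" "w = f x" by auto
    hence "x \<in> {x \<in> carrier A. f x \<in> B2}" using w2 by auto
    hence w1: "w \<in> B1" using eA x by auto
    have "y = w \<oplus>\<^bsub>B\<^esub> y'" unfolding w_def using yc
      by (simp add: B.minus_eq B.a_assoc B.l_neg)
    then show "y \<in> B1" using B.submoduleE(5)[OF s1] w1 y' by auto
  qed
  then show ?thesis using sub by auto
qed

lemma ses_le:
  assumes mA: "Module.module R A" and mB: "Module.module R B" and mC: "Module.module R C"
    and ses: "short_exact R A B C f g"
    and cB: "is_chain R B n NB"
    and LA: "module_length R A = enat LA" and LC: "module_length R C = enat LC"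
  shows "n \<le> LA + LC"
proof -
  have hf: "module_hom R A B f" and hg: "module_hom R B C g"
    using ses unfolding short_exact_def by auto
  have subB: "\<And>i. i \<le> n \<Longrightarrow> submodule (NB i) R B" and strB: "\<And>i. i < n \<Longrightarrow> NB i \<subset> NB (Suc i)"
    using cB unfolding is_chain_def by auto
  define PA where "PA i = {x \<in> carrier A. f x \<in> NB i}" for i
  define PC where "PC i = g ` NB i" for i
  define SA where "SA = {i. i<n \<and> PA i \<noteq> PA (Suc i)}"
  define SC where "SC = {i. i<n \<and> PC i \<noteq> PC (Suc i)}"
  have "card SA \<le> LA" unfolding SA_def
  proof (rule weak_chain_card[OF _ _ LA])
    show "\<forall>i\<le>n. submodule (PA i) R A" unfolding PA_def using sub_preimage[OF mA mB hf subB] by auto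
    show "\<forall>i<n. PA i \<subseteq> PA (Suc i)" unfolding PA_def using strB by auto
  qed
  moreover have "card SC \<le> LC" unfolding SC_def
  proof (rule weak_chain_card[OF _ _ LC])
    show "\<forall>i\<le>n. submodule (PC i) R C" unfolding PC_def using sub_image[OF mB mC hg subB] by auto
    show "\<forall>i<n. PC i \<subseteq> PC (Suc i)" unfolding PC_def using strB by (meson image_mono less_imp_le)
  qed
  moreover have "{..<n} \<subseteq> SA \<union> SC"
  proof
    fix i assume i: "i \<in> {..<n}"
    show "i \<in> SA \<union> SC"
    proof (rule ccontr)
      assume "i \<notin> SA \<union> SC"
      hence "PA i = PA (Suc i)" "PC i = PC (Suc i)" using i unfolding SA_def SC_def by auto
      hence "NB i = NB (Suc i)"
        using modular[OF mA mB mC ses subB[of i] subB[of "Suc i"]] strB[of i] i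
        unfolding PA_def PC_def by auto
      then show False using strB[of i] i by auto
    qed
  qed
  hence "n \<le> card (SA \<union> SC)"
    by (metis card_lessThan card_mono finite_Un SA_def SC_def finite_Collect_conjI finite_lessThan lessThan_def)
  moreover have "card (SA \<union> SC) \<le> card SA + card SC" by (rule card_Un_le)
  ultimately show ?thesis by linarith
qed

lemma ses_length:
  assumes mA: "Module.module R A" and mB: "Module.module R B" and mC: "Module.module R C"
    and ses: "short_exact R A B C f g"
    and LA: "module_length R A = enat LA" and LB: "module_length R B = enat LB"
  shows "\<exists>LC. module_length R C = enat LC \<and> LB = LA + LC"
proof -
  interpret A: Module.module R A by fact
  have c0: "is_chain R A 0 (\<lambda>_. carrier A)" unfolding is_chain_def using A.carrier_is_submodule by auto
  have "module_length R C \<le> enat LB"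
  proof (rule length_le)
    fix c NC assume "is_chain R C c NC"
    then have "enat (0 + c) \<le> module_length R B" using ses_ge[OF mA mB mC ses c0] by blast
    then show "c \<le> LB" using LB by simp
  qed
  then obtain LC where LC: "module_length R C = enat LC" by (cases "module_length R C") auto
  obtain NA where NA: "is_chain R A LA NA" using length_attained[OF mA] LA by fastforce
  obtain NC where NC: "is_chain R C LC NC" using length_attained[OF mC] LC by fastforce
  obtain NB where NB: "is_chain R B LB NB" using length_attained[OF mB] LB by fastforce
  have "LA + LC \<le> LB" using ses_ge[OF mA mB mC ses NA NC] LB by simp
  moreover have "LB \<le> LA + LC" using ses_le[OF mA mB mC ses NB LA LC] .
  ultimately show ?thesis using LC by auto
qed

lemma delta_cong:
  assumes "\<forall>m\<ge>n0. f m = g m" "n \<ge> n0"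
  shows "Delta d k f n = Delta d k g n"
  using assms(2)
proof (induction k arbitrary: n)
  case 0
  then show ?case using assms(1) by (simp add: Delta_def)
next
  case (Suc k)
  have "Delta d (Suc k) f n = Delta d k f (n + int d) - Delta d k f n"
    by (simp add: Delta_def diff_op_def)
  also have "\<dots> = Delta d k g (n + int d) - Delta d k g n" using Suc by simp
  also have "\<dots> = Delta d (Suc k) g n" by (simp add: Delta_def diff_op_def)
  finally show ?case .
qed

lemma Delta_Suc_right: "Delta d (Suc k) f = Delta d k (diff_op d f)"
  unfolding Delta_def by (simp add: funpow_Suc_right del: funpow.simps)

theorem lemma3p4:
  fixes R0 :: "'r ring"
    and HY :: "int \<Rightarrow> ('r, 'a) module"
    and HYz :: "int \<Rightarrow> ('r, 'b) module"
    and d :: nat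
  assumes "cring R0"
    and "\<And>n. Module.module R0 (HY n)"
    and "\<And>n. Module.module R0 (HYz n)"
    and "d > 0" and "even d"
    and "\<And>n. module_length R0 (HY n) < \<infinity>"
    and "\<exists>n0. \<forall>n\<ge>n0. \<exists>f g. short_exact R0 (HY n) (HY (n + int d)) (HYz n) f g"
  shows "(\<exists>n0. \<forall>n\<ge>n0. herbrand R0 d HYz n = herbrand R0 d HY (n + int d) - herbrand R0 d HY n)
       \<and> (\<forall>s\<ge>1. \<exists>n0. \<forall>n\<ge>n0. Delta d (s - 1) (herbrand R0 d HYz) n = Delta d s (herbrand R0 d HY) n)"
proof -
  obtain n0 where n0: "\<forall>n\<ge>n0. \<exists>f g. short_exact R0 (HY n) (HY (n + int d)) (HYz n) f g"
    using assms(7) by blast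
  have lamz: "lam R0 HYz n = lam R0 HY (n + int d) - lam R0 HY n" if nn: "n \<ge> n0" for n
  proof -
    obtain f g where ses: "short_exact R0 (HY n) (HY (n + int d)) (HYz n) f g" using n0 nn by blast
    obtain LA where LA: "module_length R0 (HY n) = enat LA"
      using assms(6)[of n] by (cases "module_length R0 (HY n)") auto
    obtain LB where LB: "module_length R0 (HY (n + int d)) = enat LB"
      using assms(6)[of "n + int d"] by (cases "module_length R0 (HY (n + int d))") auto
    obtain LC where "module_length R0 (HYz n) = enat LC" "LB = LA + LC"
      using ses_length[OF assms(2) assms(2) assms(3) ses LA LB] by blast
    then show ?thesis using LA LB unfolding lam_def by simp
  qed
  have sgn: "(if even (n + int d + int i) then 1 else -1) = (if even (n + int i) then (1::int) else -1)" for n i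
    using assms(5) by auto
  have H: "herbrand R0 d HYz n = herbrand R0 d HY (n + int d) - herbrand R0 d HY n" if "n \<ge> n0" for n
  proof -
    have "herbrand R0 d HYz n = (\<Sum>i<d. (if even (n + int i) then 1 else -1) *
            (lam R0 HY (n + int i + int d) - lam R0 HY (n + int i)))"
      unfolding herbrand_def using lamz that by (intro sum.cong) auto
    also have "\<dots> = (\<Sum>i<d. (if even (n + int d + int i) then 1 else -1) * lam R0 HY (n + int d + int i))
              - (\<Sum>i<d. (if even (n + int i) then 1 else -1) * lam R0 HY (n + int i))"
      unfolding sum_subtractf[symmetric] sgn by (intro sum.cong) (auto simp: right_diff_distrib add_ac)
    finally show ?thesis unfolding herbrand_def .
  qed
  show ?thesis
  proof (intro conjI allI impI)
    show "\<exists>n0. \<forall>n\<ge>n0. herbrand R0 d HYz n = herbrand R0 d HY (n + int d) - herbrand R0 d HY n"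
      using H by blast
  next
    fix s :: nat assume s: "1 \<le> s"
    have e: "\<forall>m\<ge>n0. herbrand R0 d HYz m = diff_op d (herbrand R0 d HY) m"
      using H unfolding diff_op_def by auto
    have "Delta d (s - 1) (herbrand R0 d HYz) n = Delta d s (herbrand R0 d HY) n" if "n \<ge> n0" for n
    proof -
      have "Delta d (s - 1) (herbrand R0 d HYz) n = Delta d (s - 1) (diff_op d (herbrand R0 d HY)) n"
        by (rule delta_cong[OF e that])
      also have "\<dots> = Delta d (Suc (s - 1)) (herbrand R0 d HY) n" by (simp add: Delta_Suc_right)
      also have "\<dots> = Delta d s (herbrand R0 d HY) n" using s by simp
      finally show ?thesis .
    qed
    then show "\<exists>n0. \<forall>n\<ge>n0. Delta d (s - 1) (herbrand R0 d HYz) n = Delta d s (herbrand R0 d HY) n"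
      by blast
  qed
qed

end
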